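(* For every even $n\ge4$, no vertex of the unweighted cycle $C_n$ is sedentary.
   Context: For a graph with adjacency matrix $A$, $U(t)=e^{itA}$. A vertex $u$ is sedentary if $\inf_{t>0}|U(t)_{u,u}|\ge C$ for some constant $0<C\le1$, and not sedentary if $\inf_{t>0}|U(t)_{u,u}|=0$. *)

theory Defs
  imports Complex_Main
begin

text \<open>Square matrices of size n are represented as functions nat => nat => complex,
  only the entries with indices below n being relevant.\<close>

definition mat_mult :: "nat \<Rightarrow> (nat \<Rightarrow> nat \<Rightarrow> complex) \<Rightarrow> (nat \<Rightarrow> nat \<Rightarrow> complex) \<Rightarrow> nat \<Rightarrow> nat \<Rightarrow> complex" where
  "mat_mult n A B = (\<lambda>i j. \<Sum>l<n. A i l * B l j)"

fun mat_pow :: "nat \<Rightarrow> (nat \<Rightarrow> nat \<Rightarrow> complex) \<Rightarrow> nat \<Rightarrow> nat \<Rightarrow> nat \<Rightarrow> complex" where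
  "mat_pow n A 0 = (\<lambda>i j. if i = j then 1 else 0)"
| "mat_pow n A (Suc k) = mat_mult n A (mat_pow n A k)"

definition cycle_adj :: "nat \<Rightarrow> nat \<Rightarrow> nat \<Rightarrow> complex" where
  "cycle_adj n i j = (if i < n \<and> j < n \<and> (j = (i + 1) mod n \<or> i = (j + 1) mod n) then 1 else 0)"

text \<open>Transition matrix U(t) = exp(i t A), written as the exponential power series.\<close>
definition transition :: "nat \<Rightarrow> (nat \<Rightarrow> nat \<Rightarrow> complex) \<Rightarrow> real \<Rightarrow> nat \<Rightarrow> nat \<Rightarrow> complex" where
  "transition n A t u v = (\<Sum>k. (\<i> * complex_of_real t) ^ k / of_nat (fact k) * mat_pow n A k u v)"

definition sedentary :: "nat \<Rightarrow> (nat \<Rightarrow> nat \<Rightarrow> complex) \<Rightarrow> nat \<Rightarrow> bool" where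
  "sedentary n A u = (\<exists>C. 0 < C \<and> C \<le> 1 \<and> (INF t\<in>{0::real<..}. cmod (transition n A t u u)) \<ge> C)"

end

theory Submission
  imports Defs
begin

abbreviation PP :: "nat \<Rightarrow> nat \<Rightarrow> nat \<Rightarrow> nat \<Rightarrow> complex" where
  "PP n k i j \<equiv> mat_pow n (cycle_adj n) k i j"

definition pos :: "nat \<Rightarrow> nat \<Rightarrow> int \<Rightarrow> nat" where
  "pos n u d = nat ((int u + d) mod int n)"

lemma adj_split:
  assumes "n \<ge> 3" "i < n" "l < n"
  shows "cycle_adj n i l = (if l = (i+1) mod n then 1 else 0) + (if l = (i+n-1) mod n then 1 else 0)"
proof -
  have a: "(i+1) mod n = (if i + 1 = n then 0 else i+1)" using assms by auto
  have b: "(i+n-1) mod n = (if i = 0 then n - 1 else i - 1)"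
  proof (cases "i = 0")
    case True then show ?thesis using assms by auto
  next
    case False
    then have "i+n-1 = (i - 1) + n" by auto
    then have "(i+n-1) mod n = (i - 1) mod n" by (metis mod_add_self2)
    also have "\<dots> = i - 1" using assms by simp
    finally show ?thesis using False by simp
  qed
  have c: "(l+1) mod n = (if l + 1 = n then 0 else l+1)" using assms by auto
  show ?thesis unfolding cycle_adj_def a b c using assms by auto
qed

lemma neighbor:
  assumes "n \<ge> 3" "i < n"
  shows "mat_mult n (cycle_adj n) B i j = B ((i+1) mod n) j + B ((i+n-1) mod n) j"
proof -
  have "mat_mult n (cycle_adj n) B i j = (\<Sum>l<n. (if l = (i+1) mod n then B l j else 0) + (if l = (i+n-1) mod n then B l j else 0))"
    unfolding mat_mult_def
    by (rule sum.cong) (auto simp: adj_split[OF assms] distrib_right)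
  also have "\<dots> = B ((i+1) mod n) j + B ((i+n-1) mod n) j"
    using assms by (simp add: sum.distrib)
  finally show ?thesis .
qed

lemma int_pos: "n > 0 \<Longrightarrow> int (pos n u d) = (int u + d) mod int n"
  unfolding pos_def by simp

lemma pos_lt: "n > 0 \<Longrightarrow> pos n u d < n"
proof -
  assume n: "n > 0"
  have "int (pos n u d) < int n" using int_pos[OF n] n by simp
  then show ?thesis by simp
qed

lemma pos_succ: "n > 0 \<Longrightarrow> (pos n u d + 1) mod n = pos n u (d+1)"
proof -
  assume n: "n > 0"
  have "int ((pos n u d + 1) mod n) = (int (pos n u d) + 1) mod int n"
    by (simp add: of_nat_mod add.commute)
  also have "\<dots> = ((int u + d) mod int n + 1) mod int n" by (simp only: int_pos[OF n])
  also have "\<dots> = (int u + (d + 1)) mod int n" by (metis mod_add_left_eq add.assoc)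
  finally show ?thesis using int_pos[OF n, of u "d+1"] by linarith
qed

lemma modpred: "((a::int) mod m + m - 1) mod m = (a - 1) mod m"
proof -
  have "a mod m + m - 1 = (a mod m - 1) + m" by simp
  then have "(a mod m + m - 1) mod m = (a mod m - 1) mod m" by (metis mod_add_self2)
  also have "\<dots> = (a - 1) mod m" by (simp add: mod_diff_left_eq)
  finally show ?thesis .
qed

lemma pos_pred: "n > 0 \<Longrightarrow> (pos n u d + n - 1) mod n = pos n u (d-1)"
proof -
  assume n: "n > 0"
  have e: "int (pos n u d + n - 1) = int (pos n u d) + int n - 1" using n by linarith
  have "int ((pos n u d + n - 1) mod n) = int (pos n u d + n - 1) mod int n"
    by (rule of_nat_mod)
  also have "\<dots> = ((int u + d) mod int n + int n - 1) mod int n" unfolding e int_pos[OF n] ..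
  also have "\<dots> = (int u + (d - 1)) mod int n" by (metis modpred add_diff_eq)
  finally show ?thesis using int_pos[OF n, of u "d-1"] by linarith
qed

lemma PP_step:
  assumes "n \<ge> 3"
  shows "PP n (Suc k) (pos n u d) j = PP n k (pos n u (d+1)) j + PP n k (pos n u (d-1)) j"
proof -
  have n0: "n > 0" using assms by simp
  show ?thesis
    by (simp only: mat_pow.simps neighbor[OF assms pos_lt[OF n0]] pos_succ[OF n0] pos_pred[OF n0])
qed

lemma PP_zero:
  assumes "n \<ge> 3" "u < n"
  shows "PP n 0 (pos n u d) u = (if d mod int n = 0 then 1 else 0)"
proof -
  have "pos n u d = u \<longleftrightarrow> (int u + d) mod int n = int u"
    using int_pos[of n u d] assms by auto
  also have "\<dots> \<longleftrightarrow> d mod int n = 0"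
  proof
    assume h: "(int u + d) mod int n = int u"
    have "d mod int n = ((int u + d) - int u) mod int n" by simp
    also have "\<dots> = ((int u + d) mod int n - int u mod int n) mod int n" by (simp add: mod_diff_eq)
    also have "\<dots> = 0" using h assms by simp
    finally show "d mod int n = 0" .
  next
    assume h: "d mod int n = 0"
    have "(int u + d) mod int n = (int u + d mod int n) mod int n" by (simp add: mod_add_right_eq)
    then show "(int u + d) mod int n = int u" using h assms by simp
  qed
  finally show ?thesis by auto
qed

lemma pos0: "u < n \<Longrightarrow> pos n u 0 = u"
  unfolding pos_def by simp


lemma modz:
  assumes "- int n < d" "d < int n"
  shows "(d mod int n = 0) \<longleftrightarrow> d = 0"
proof
  assume "d mod int n = 0"
  then have "int n dvd d" by (simp add: mod_eq_0_iff_dvd)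
  show "d = 0"
  proof (rule ccontr)
    assume "d \<noteq> 0"
    then have "\<bar>int n\<bar> \<le> \<bar>d\<bar>" using dvd_imp_le_int \<open>int n dvd d\<close> by blast
    then show False using assms by linarith
  qed
qed simp

lemma PP_parity:
  assumes "n \<ge> 3" "even n" "u < n"
  shows "odd (int k + d) \<Longrightarrow> PP n k (pos n u d) u = 0"
proof (induction k arbitrary: d)
  case 0
  have "\<not> (d mod int n = 0)"
  proof
    assume "d mod int n = 0"
    then have "int n dvd d" by (simp add: mod_eq_0_iff_dvd)
    moreover have "2 dvd int n" using assms(2) by simp
    ultimately have "even d" using dvd_trans by blast
    then show False using 0 by simp
  qed
  then show ?case using PP_zero[OF assms(1,3)] by simp
next
  case (Suc k)
  have "odd (int k + (d+1))" "odd (int k + (d-1))" using Suc.prems by (simp_all add: algebra_simps)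
  then show ?case using PP_step[OF assms(1)] Suc.IH by simp
qed

lemma PP_bound:
  assumes "n \<ge> 3" "u < n"
  shows "norm (PP n k (pos n u d) u) \<le> 2 ^ k"
proof (induction k arbitrary: d)
  case 0
  then show ?case using PP_zero[OF assms] by simp
next
  case (Suc k)
  have "norm (PP n (Suc k) (pos n u d) u) \<le> norm (PP n k (pos n u (d+1)) u) + norm (PP n k (pos n u (d-1)) u)"
    unfolding PP_step[OF assms(1)] by (rule norm_triangle_ineq)
  also have "\<dots> \<le> 2^k + 2^k" using Suc.IH by (intro add_mono)
  finally show ?case by simp
qed

lemma PP_real:
  assumes "n \<ge> 3" "u < n"
  shows "PP n k (pos n u d) u \<in> \<real>"
proof (induction k arbitrary: d)
  case 0
  then show ?case using PP_zero[OF assms] by simp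
next
  case (Suc k)
  then show ?case unfolding PP_step[OF assms(1)] by (intro Reals_add)
qed

fun W :: "nat \<Rightarrow> int \<Rightarrow> nat" where
  "W 0 d = (if d = 0 then 1 else 0)"
| "W (Suc k) d = W k (d + 1) + W k (d - 1)"

lemma PP_W:
  assumes "n \<ge> 3" "u < n"
  shows "\<bar>d\<bar> + int k < int n \<Longrightarrow> PP n k (pos n u d) u = of_nat (W k d)"
proof (induction k arbitrary: d)
  case 0
  then show ?case using PP_zero[OF assms] modz[of n d] by simp
next
  case (Suc k)
  have "\<bar>d+1\<bar> + int k < int n" "\<bar>d-1\<bar> + int k < int n" using Suc.prems by auto
  then show ?case using Suc.IH PP_step[OF assms(1)] by simp
qed

lemma PP_small:
  assumes "n \<ge> 8" "u < n"
  shows "PP n 0 u u = 1" "PP n 2 u u = 2" "PP n 4 u u = 6" "PP n 6 u u = 20"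
proof -
  have n3: "n \<ge> 3" using assms by simp
  have u: "pos n u 0 = u" by (rule pos0[OF assms(2)])
  have h: "\<And>k. k \<le> 6 \<Longrightarrow> PP n k u u = of_nat (W k 0)"
    using PP_W[OF n3 assms(2), of 0] assms(1) unfolding u by simp
  have "W 2 0 = 2" "W 4 0 = 6" "W 6 0 = 20" by code_simp+
  then show "PP n 0 u u = 1" "PP n 2 u u = 2" "PP n 4 u u = 6" "PP n 6 u u = 20"
    using h[of 2] h[of 4] h[of 6] by simp_all
qed


lemma PP_uu_bound: "n \<ge> 3 \<Longrightarrow> u < n \<Longrightarrow> norm (PP n k u u) \<le> 2 ^ k"
  using PP_bound[of n u k 0] pos0[of u n] by simp

lemma PP_uu_odd: "n \<ge> 3 \<Longrightarrow> even n \<Longrightarrow> u < n \<Longrightarrow> odd k \<Longrightarrow> PP n k u u = 0"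
  using PP_parity[of n u k 0] pos0[of u n] by simp

lemma PP_uu_real: "n \<ge> 3 \<Longrightarrow> u < n \<Longrightarrow> PP n k u u \<in> \<real>"
  using PP_real[of n u k 0] pos0[of u n] by simp

definition cf :: "nat \<Rightarrow> nat \<Rightarrow> nat \<Rightarrow> complex" where
  "cf n u k = \<i> ^ k / fact k * PP n k u u"

lemma trans_powser:
  "transition n (cycle_adj n) t u u = (\<Sum>k. cf n u k * (complex_of_real t) ^ k)"
proof -
  have "\<And>k. (\<i> * complex_of_real t) ^ k / of_nat (fact k) * PP n k u u = cf n u k * (complex_of_real t) ^ k"
    by (simp add: cf_def power_mult_distrib divide_inverse mult_ac)
  then show ?thesis unfolding transition_def by simp
qed

lemma cf_norm:
  assumes "n \<ge> 3" "u < n"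
  shows "norm (cf n u k * y ^ k) \<le> inverse (fact k) * (2 * norm y) ^ k"
proof -
  have nf: "norm (fact k :: complex) = fact k" by (metis of_nat_fact norm_of_nat)
  have "norm (cf n u k * y ^ k) = norm (PP n k u u) * norm y ^ k / fact k"
    by (simp add: cf_def norm_mult norm_divide norm_power nf)
  also have "\<dots> = inverse (fact k) * norm (PP n k u u) * norm y ^ k"
    by (simp add: divide_inverse mult_ac)
  also have "\<dots> \<le> inverse (fact k) * 2 ^ k * norm y ^ k"
    using PP_uu_bound[OF assms] by (intro mult_right_mono mult_left_mono) auto
  finally show ?thesis by (simp add: power_mult_distrib)
qed

lemma cf_summable:
  assumes "n \<ge> 3" "u < n"
  shows "summable (\<lambda>k. cf n u k * y ^ k)"
  by (rule summable_comparison_test[OF _ summable_exp[of "2 * norm y"]]) (use cf_norm[OF assms] in auto)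

lemma U_cont:
  assumes "n \<ge> 3" "u < n"
  shows "isCont (\<lambda>t. Re (transition n (cycle_adj n) t u u)) t"
proof -
  have "isCont (\<lambda>x. \<Sum>k. cf n u k * x ^ k) (complex_of_real t)"
    by (rule isCont_powser_converges_everywhere) (rule cf_summable[OF assms])
  then have "isCont (\<lambda>t. \<Sum>k. cf n u k * (complex_of_real t) ^ k) t"
    by (rule isCont_o2[OF isCont_of_real[OF continuous_ident]])
  then show ?thesis unfolding trans_powser by (rule isCont_Re)
qed

lemma U_zero:
  assumes "n \<ge> 3" "u < n"
  shows "transition n (cycle_adj n) 0 u u = 1"
  unfolding trans_powser using powser_zero[of "cf n u"] by (simp add: cf_def)

lemma U_real:
  assumes "n \<ge> 3" "even n" "u < n"
  shows "Im (transition n (cycle_adj n) t u u) = 0"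
proof -
  have r: "Im (cf n u k * (complex_of_real t) ^ k) = 0" for k
  proof (cases "even k")
    case True
    then obtain m where m: "k = 2 * m" by blast
    have i: "\<i> ^ k = (-1) ^ m" unfolding m power_mult by simp
    have f: "(fact k :: complex) \<in> \<real>" by (metis Reals_of_nat of_nat_fact)
    have "cf n u k * (complex_of_real t) ^ k \<in> \<real>"
      unfolding cf_def i using PP_uu_real[OF assms(1,3)] f
      by (intro Reals_mult Reals_divide Reals_power Reals_of_real) auto
    then show ?thesis by (simp add: complex_is_Real_iff)
  next
    case False
    then show ?thesis by (simp add: cf_def PP_uu_odd[OF assms])
  qed
  have "Im (\<Sum>k. cf n u k * (complex_of_real t) ^ k) = (\<Sum>k. Im (cf n u k * (complex_of_real t) ^ k))"
    by (rule Im_suminf[OF cf_summable[OF assms(1,3)]])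
  also have "\<dots> = (\<Sum>k. (0::real))" by (simp only: r)
  finally show ?thesis unfolding trans_powser by simp
qed

lemma zero_exists:
  assumes "n \<ge> 3" "even n" "u < n" "t0 > 0" "Re (transition n (cycle_adj n) t0 u u) \<le> 0"
  shows "\<exists>t>0. transition n (cycle_adj n) t u u = 0"
proof -
  let ?g = "\<lambda>t. Re (transition n (cycle_adj n) t u u)"
  have c: "continuous_on {0..t0} ?g"
    by (intro continuous_at_imp_continuous_on ballI U_cont[OF assms(1,3)])
  have g0: "?g 0 = 1" using U_zero[OF assms(1,3)] by simp
  obtain x where x: "0 \<le> x" "x \<le> t0" "?g x = 0"
    using IVT2'[of ?g t0 0 0, OF assms(5) _ _ c] g0 assms(4) by auto
  have "x \<noteq> 0" using x g0 by auto
  moreover have "transition n (cycle_adj n) x u u = 0"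
    using x(3) U_real[OF assms(1-3), of x] by (simp add: complex_eq_iff)
  ultimately show ?thesis using x by (intro exI[of _ x]) auto
qed

lemma not_sed_from_zero:
  assumes "\<exists>t>0. transition n A t u u = 0"
  shows "\<not> sedentary n A u"
proof
  assume "sedentary n A u"
  then obtain C where C: "0 < C" "C \<le> (INF t\<in>{0::real<..}. cmod (transition n A t u u))"
    unfolding sedentary_def by auto
  obtain t where t: "t > 0" "transition n A t u u = 0" using assms by auto
  have "(INF t\<in>{0::real<..}. cmod (transition n A t u u)) \<le> cmod (transition n A t u u)"
    by (rule cINF_lower) (auto intro: bdd_belowI[of _ 0] simp: t)
  then show False using C t by simp
qed


lemma fact_bound: "fact 8 * 9 ^ k \<le> (fact (k + 8) :: real)"
proof (induction k)
  case 0
  then show ?case by simp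
next
  case (Suc k)
  have "fact 8 * 9 ^ Suc k = 9 * (fact 8 * 9 ^ k :: real)" by simp
  also have "\<dots> \<le> 9 * fact (k + 8)" using Suc.IH by simp
  also have "\<dots> \<le> of_nat (Suc (k + 8)) * fact (k + 8)" by (intro mult_right_mono) auto
  also have "\<dots> = fact (Suc k + 8)" by (simp only: add_Suc fact_Suc)
  finally show ?case .
qed

lemma cf_vals:
  assumes "n \<ge> 8" "even n" "u < n"
  shows "cf n u 0 = 1" "cf n u 1 = 0" "cf n u 2 = -1" "cf n u 3 = 0"
        "cf n u 4 = 1/4" "cf n u 5 = 0" "cf n u 6 = -1/36" "cf n u 7 = 0"
proof -
  have n3: "n \<ge> 3" using assms by simp
  note P = PP_small[OF assms(1,3)]
  note O = PP_uu_odd[OF n3 assms(2,3)]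
  show "cf n u 0 = 1" "cf n u 2 = -1" "cf n u 4 = 1/4" "cf n u 6 = -1/36"
    unfolding cf_def P by (simp_all add: eval_nat_numeral)
  show "cf n u 1 = 0" "cf n u 3 = 0" "cf n u 5 = 0" "cf n u 7 = 0"
  proof -
    have o: "PP n 1 u u = 0" "PP n 3 u u = 0" "PP n 5 u u = 0" "PP n 7 u u = 0"
      by (rule O, simp)+
    show "cf n u 1 = 0" "cf n u 3 = 0" "cf n u 5 = 0" "cf n u 7 = 0"
      unfolding cf_def o by simp_all
  qed
qed

lemma tail_term:
  "(3::real) ^ (k + 8) / fact (k + 8) \<le> 6561 / 40320 * (1/3) ^ k"
proof -
  have "(3::real) ^ (k + 8) / fact (k + 8) \<le> 3 ^ (k + 8) / (fact 8 * 9 ^ k)"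
    by (rule divide_left_mono[OF fact_bound]) auto
  also have "(3::real) ^ (k + 8) / (fact 8 * 9 ^ k) = 6561 / 40320 * (1/3) ^ k"
  proof -
    have a: "(9::real) ^ k = 3 ^ k * 3 ^ k" by (simp add: power_mult_distrib[symmetric])
    have b: "(fact 8 :: real) = 40320" by (simp add: eval_nat_numeral)
    have c: "(3::real) ^ (k + 8) = 6561 * 3 ^ k" by (simp add: power_add)
    have d: "((1::real)/3) ^ k = 1 / 3 ^ k" by (rule power_one_over)
    have e: "\<And>x::real. x > 0 \<Longrightarrow> 6561 * x / (40320 * (x * x)) = 6561 / 40320 * (1 / x)"
      by (simp add: field_simps)
    show ?thesis unfolding a b c d by (rule e) simp
  qed
  finally show ?thesis .
qed

lemma large_case:
  assumes "n \<ge> 8" "even n" "u < n"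
  shows "Re (transition n (cycle_adj n) (3/2) u u) < 0"
proof -
  have n3: "n \<ge> 3" using assms by simp
  define a where "a = (\<lambda>k. cf n u k * (complex_of_real (3/2)) ^ k)"
  have sa: "summable a" unfolding a_def by (rule cf_summable[OF n3 assms(3)])
  have split: "suminf a = (\<Sum>k. a (k + 8)) + (\<Sum>i<8. a i)"
    by (rule suminf_split_initial_segment[OF sa])
  have "(\<Sum>i<8. a i) = a 0 + a 1 + a 2 + a 3 + a 4 + a 5 + a 6 + a 7"
    by (simp add: eval_nat_numeral)
  also have "\<dots> = - 77 / 256"
    unfolding a_def cf_vals[OF assms] by (simp add: field_simps)
  finally have init: "(\<Sum>i<8. a i) = - 77 / 256" .
  define g where "g = (\<lambda>k::nat. 6561 / 40320 * (1/3::real) ^ k)"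
  have sg: "summable g" unfolding g_def
    by (intro summable_mult summable_geometric) simp
  have bound: "norm (a (k + 8)) \<le> g k" for k
  proof -
    have "norm (a (k + 8)) \<le> inverse (fact (k + 8)) * (2 * norm (complex_of_real (3/2))) ^ (k + 8)"
      unfolding a_def by (rule cf_norm[OF n3 assms(3)])
    also have "\<dots> = 3 ^ (k + 8) / fact (k + 8)"
    proof -
      have h: "2 * norm (complex_of_real (3/2)) = (3::real)" by simp
      show ?thesis unfolding h by (simp only: divide_inverse mult.commute)
    qed
    also have "\<dots> \<le> g k" unfolding g_def by (rule tail_term)
    finally show ?thesis .
  qed
  have tl: "norm (\<Sum>k. a (k + 8)) \<le> suminf g"
    by (rule norm_suminf_le[OF bound sg])
  have gs: "(\<Sum>k. (1/3::real)^k) = 3/2" using suminf_geometric[of "1/3::real"] by simp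
  have "suminf g = 6561/40320 * (\<Sum>k. (1/3::real)^k)" unfolding g_def
    by (rule suminf_mult) (rule summable_geometric, simp)
  then have sgv: "suminf g = 6561 / 40320 * (3/2)" using gs by simp
  have "Re (suminf a) = Re (\<Sum>k. a (k + 8)) - 77 / 256"
    unfolding split init by simp
  also have "\<dots> \<le> norm (\<Sum>k. a (k + 8)) - 77 / 256"
    using complex_Re_le_cmod by simp
  also have "\<dots> \<le> 6561 / 40320 * (3/2) - 77 / 256" using tl sgv by simp
  also have "\<dots> < 0" by simp
  finally show ?thesis unfolding trans_powser a_def .
qed


lemma exp_one:
  fixes a b x :: real
  shows "(\<lambda>k. complex_of_real a * (\<i> ^ k / fact k * complex_of_real b ^ k * complex_of_real x ^ k))
           sums (complex_of_real a * cis (x * b))"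
proof -
  have s1: "(\<lambda>k. (\<i> * complex_of_real (x * b)) ^ k /\<^sub>R fact k) sums cis (x * b)"
    unfolding cis_conv_exp by (rule exp_converges)
  have s2: "(\<lambda>k. (\<i> * complex_of_real (x * b)) ^ k /\<^sub>R fact k)
          = (\<lambda>k. \<i> ^ k / fact k * complex_of_real b ^ k * complex_of_real x ^ k)"
    by (rule ext) (simp add: scaleR_conv_of_real power_mult_distrib divide_inverse mult_ac)
  show ?thesis using sums_mult[OF s1[unfolded s2], of "complex_of_real a"] .
qed

lemma exp_combo:
  fixes x a1 a2 a3 a4 b1 b2 b3 b4 :: real
  assumes "\<And>k. p k = complex_of_real a1 * complex_of_real b1 ^ k + complex_of_real a2 * complex_of_real b2 ^ k
                   + complex_of_real a3 * complex_of_real b3 ^ k + complex_of_real a4 * complex_of_real b4 ^ k"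
  shows "Re (\<Sum>k. \<i> ^ k / fact k * p k * complex_of_real x ^ k)
         = a1 * cos (x * b1) + a2 * cos (x * b2) + a3 * cos (x * b3) + a4 * cos (x * b4)"
proof -
  let ?T = "\<lambda>a b k. complex_of_real a * (\<i> ^ k / fact k * complex_of_real b ^ k * complex_of_real x ^ k)"
  have eq: "(\<lambda>k. \<i> ^ k / fact k * p k * complex_of_real x ^ k)
          = (\<lambda>k. ?T a1 b1 k + ?T a2 b2 k + ?T a3 b3 k + ?T a4 b4 k)"
    by (rule ext) (simp add: assms algebra_simps)
  have "(\<lambda>k. ?T a1 b1 k + ?T a2 b2 k + ?T a3 b3 k + ?T a4 b4 k) sums
        (complex_of_real a1 * cis (x * b1) + complex_of_real a2 * cis (x * b2)
         + complex_of_real a3 * cis (x * b3) + complex_of_real a4 * cis (x * b4))"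
    by (intro sums_add exp_one)
  then have "(\<Sum>k. \<i> ^ k / fact k * p k * complex_of_real x ^ k) =
        complex_of_real a1 * cis (x * b1) + complex_of_real a2 * cis (x * b2)
         + complex_of_real a3 * cis (x * b3) + complex_of_real a4 * cis (x * b4)"
    unfolding eq by (rule sums_unique[symmetric])
  then show ?thesis by simp
qed

lemma PP4:
  assumes "u < 4"
  shows "PP 4 (Suc k) (pos 4 u d) u = (if odd (int k + d) then 2 ^ k else 0)"
proof (induction k arbitrary: d)
  case 0
  have h1: "odd d \<longleftrightarrow> ((d+1) mod 4 = 0 \<or> (d-1) mod 4 = 0)" by presburger
  have h2: "\<not> ((d+1) mod 4 = 0 \<and> (d-1) mod 4 = 0)" by presburger
  have "PP 4 (Suc 0) (pos 4 u d) u = PP 4 0 (pos 4 u (d+1)) u + PP 4 0 (pos 4 u (d-1)) u"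
    by (rule PP_step) simp
  also have "\<dots> = (if (d+1) mod 4 = 0 then 1 else 0) + (if (d-1) mod 4 = 0 then 1 else 0)"
    using PP_zero[of 4 u] assms by simp
  finally show ?case using h1 h2 by auto
next
  case (Suc k)
  have p: "odd (int k + (d+1)) \<longleftrightarrow> odd (int (Suc k) + d)" "odd (int k + (d-1)) \<longleftrightarrow> odd (int (Suc k) + d)"
    by presburger+
  have "PP 4 (Suc (Suc k)) (pos 4 u d) u = PP 4 (Suc k) (pos 4 u (d+1)) u + PP 4 (Suc k) (pos 4 u (d-1)) u"
    by (rule PP_step) simp
  also have "\<dots> = (if odd (int (Suc k) + d) then 2 ^ Suc k else 0)"
    unfolding Suc.IH p by simp
  finally show ?case .
qed

lemma p4:
  assumes "u < 4"
  shows "PP 4 k u u = complex_of_real (1/4) * complex_of_real 2 ^ k + complex_of_real (1/4) * complex_of_real (-2) ^ k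
                   + complex_of_real (1/2) * complex_of_real 0 ^ k + complex_of_real 0 * complex_of_real 1 ^ k"
proof (cases k)
  case 0
  then show ?thesis by simp
next
  case (Suc m)
  have "PP 4 (Suc m) u u = (if odd (int m) then 2 ^ m else 0)"
    using PP4[OF assms, of m 0] pos0[OF assms] by simp
  moreover have "(-2::complex) ^ Suc m = (if odd m then 2 ^ Suc m else - (2 ^ Suc m))"
    by (cases "odd m") (simp_all add: power_minus_even power_minus_odd)
  ultimately show ?thesis unfolding Suc by (cases "odd m") (simp_all add: field_simps)
qed

definition f6 :: "nat \<Rightarrow> int \<Rightarrow> complex" where
  "f6 k r = (if even k then (if r = 0 then (2^k+2)/3 else if r = 2 \<or> r = 4 then (2^k-1)/3 else 0)
             else (if r = 1 \<or> r = 5 then (2^k+1)/3 else if r = 3 then (2^k-2)/3 else 0))"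

lemma f6_step:
  assumes "0 \<le> r" "r < 6"
  shows "f6 k ((r+1) mod 6) + f6 k ((r-1) mod 6) = f6 (Suc k) r"
proof -
  have "r = 0 \<or> r = 1 \<or> r = 2 \<or> r = 3 \<or> r = 4 \<or> r = 5" using assms by auto
  then show ?thesis
    by (elim disjE) (auto simp: f6_def field_simps)
qed

lemma PP6:
  assumes "u < 6"
  shows "PP 6 k (pos 6 u d) u = f6 k (d mod 6)"
proof (induction k arbitrary: d)
  case 0
  then show ?case using PP_zero[of 6 u d] assms by (simp add: f6_def)
next
  case (Suc k)
  have "PP 6 (Suc k) (pos 6 u d) u = PP 6 k (pos 6 u (d+1)) u + PP 6 k (pos 6 u (d-1)) u"
    by (rule PP_step) simp
  also have "\<dots> = f6 k ((d mod 6 + 1) mod 6) + f6 k ((d mod 6 - 1) mod 6)"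
    unfolding Suc.IH by (simp add: mod_add_left_eq mod_diff_left_eq)
  also have "\<dots> = f6 (Suc k) (d mod 6)" by (rule f6_step) simp_all
  finally show ?case .
qed

lemma p6:
  assumes "u < 6"
  shows "PP 6 k u u = complex_of_real (1/6) * complex_of_real 2 ^ k + complex_of_real (1/6) * complex_of_real (-2) ^ k
                   + complex_of_real (1/3) * complex_of_real 1 ^ k + complex_of_real (1/3) * complex_of_real (-1) ^ k"
proof -
  have "PP 6 k u u = f6 k 0" using PP6[OF assms, of k 0] pos0[OF assms] by simp
  then show ?thesis
    by (cases "even k") (simp_all add: f6_def power_minus_even power_minus_odd field_simps)
qed

lemma case4:
  assumes "u < 4"
  shows "Re (transition 4 (cycle_adj 4) (pi/2) u u) \<le> 0"
proof -
  have "Re (transition 4 (cycle_adj 4) (pi/2) u u)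
        = Re (\<Sum>k. \<i> ^ k / fact k * PP 4 k u u * complex_of_real (pi/2) ^ k)"
    unfolding trans_powser cf_def ..
  also have "\<dots> = 1/4 * cos (pi/2 * 2) + 1/4 * cos (pi/2 * (-2)) + 1/2 * cos (pi/2 * 0) + 0 * cos (pi/2 * 1)"
    by (rule exp_combo) (rule p4[OF assms])
  also have "\<dots> = 0" by simp
  finally show ?thesis by simp
qed

lemma case6:
  assumes "u < 6"
  shows "Re (transition 6 (cycle_adj 6) (pi/2) u u) \<le> 0"
proof -
  have "Re (transition 6 (cycle_adj 6) (pi/2) u u)
        = Re (\<Sum>k. \<i> ^ k / fact k * PP 6 k u u * complex_of_real (pi/2) ^ k)"
    unfolding trans_powser cf_def ..
  also have "\<dots> = 1/6 * cos (pi/2 * 2) + 1/6 * cos (pi/2 * (-2)) + 1/3 * cos (pi/2 * 1) + 1/3 * cos (pi/2 * (-1))"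
    by (rule exp_combo) (rule p6[OF assms])
  also have "\<dots> = - 1/3" by simp
  finally show ?thesis by simp
qed

theorem theorem44:
  fixes n u :: nat
  assumes "even n" and "n \<ge> 4" and "u < n"
  shows "\<not> sedentary n (cycle_adj n) u"
proof (rule not_sed_from_zero)
  have n3: "n \<ge> 3" using assms by simp
  have "n = 4 \<or> n = 6 \<or> n \<ge> 8" using assms by presburger
  then show "\<exists>t>0. transition n (cycle_adj n) t u u = 0"
  proof (elim disjE)
    assume "n = 4"
    then show ?thesis using zero_exists[OF n3 assms(1,3), of "pi/2"] case4 assms(3) by simp
  next
    assume "n = 6"
    then show ?thesis using zero_exists[OF n3 assms(1,3), of "pi/2"] case6 assms(3) by simp
  next
    assume "n \<ge> 8"
    then show ?thesis using zero_exists[OF n3 assms(1,3), of "3/2"] large_case[OF _ assms(1,3)] by simp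
  qed
qed

end
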